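(* Let $X$ be a finite $T_0$ topological space, $\mathcal V$ a multivector field on $X$ with $X$ invariant, and $\mathcal M=\{M_p\mid p\in\mathbb P\}$ a Morse predecomposition of $X$. Then for every nonempty isolated invariant set $S\subset X$ we have $S\cap\bigcup_{p\in\mathbb P}M_p\ne\emptyset$. In particular, every critical multivector $V\in\mathcal V$ satisfies $V\subset\bigcup_{p\in\mathbb P}M_p$.
   Context: Notation: $\operatorname{cl}$ is closure; $A\subset X$ is locally closed if $\operatorname{cl}A\setminus A$ is closed. A multivector field $\mathcal V$ on $X$ is a partition of $X$ into locally closed sets (multivectors); $[x]_{\mathcal V}$ is the multivector containing $x$. A multivector $V$ is critical if the relative singular homology $H(\operatorname{cl}V,\operatorname{cl}V\setminus V)$ is nontrivial, regular otherwise. $A$ is $\mathcal V$-compatible if it is a union of multivectors; $\langle A\rangle_{\mathcal V}$ is the smallest locally closed $\mathcal V$-compatible set containing $A$. $\Pi_{\mathcal V}(x)=\operatorname{cl}\{x\}\cup[x]_{\mathcal V}$. A solution is a partial map $\gamma:\mathbb Z\nrightarrow X$ with domain an integer interval and $\gamma(t+1)\in\Pi_{\mathcal V}(\gamma(t))$; a path has finite domain; a full solution has domain $\mathbb Z$. $\alpha(\gamma)=\langle\bigcap_{t\le0}\gamma((-\infty,t])\rangle_{\mathcal V}$, $\omega(\gamma)=\langle\bigcap_{t\ge0}\gamma([t,\infty))\rangle_{\mathcal V}$. A full solution is essential unless $\alpha(\gamma)$ or $\omega(\gamma)$ lies in a single regular multivector; an essential solution in $A$ is one with image in $A$. $\operatorname{Inv}S$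 is the set of $x\in S$ with an essential solution $\gamma$ in $S$, $\gamma(0)=x$; $S$ is invariant if $\operatorname{Inv}S=S$. An invariant $S$ is isolated invariant if there is a closed $N\supset\Pi_{\mathcal V}(S)$ such that every path in $N$ with endpoints in $S$ has image in $S$. A link from $S_1$ to $S_2$ is a full solution with $\alpha(\gamma)\cap S_1\ne\emptyset\ne\omega(\gamma)\cap S_2$. A Morse predecomposition of $X$ is an indexed family $\{M_p\mid p\in\mathbb P\}$ of mutually disjoint isolated invariant subsets of $X$ such that every essential solution in $X$ is a link from some $M_p$ to some $M_q$. *)

theory Defs
  imports "HOL-Analysis.Analysis" "HOL-Homology.Homology"
begin

definition locally_closed :: "'a topology \<Rightarrow> 'a set \<Rightarrow> bool" where
  "locally_closed T A \<longleftrightarrow> A \<subseteq> topspace T \<and> closedin T (T closure_of A - A)"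

definition multivector_field :: "'a topology \<Rightarrow> 'a set set \<Rightarrow> bool" where
  "multivector_field T VV \<longleftrightarrow>
     \<Union>VV = topspace T \<and> {} \<notin> VV \<and>
     (\<forall>V\<in>VV. \<forall>W\<in>VV. V \<noteq> W \<longrightarrow> V \<inter> W = {}) \<and>
     (\<forall>V\<in>VV. locally_closed T V)"

definition mv_of :: "'a set set \<Rightarrow> 'a \<Rightarrow> 'a set" where
  "mv_of VV x = (THE V. V \<in> VV \<and> x \<in> V)"

definition critical :: "'a topology \<Rightarrow> 'a set \<Rightarrow> bool" where
  "critical T V \<longleftrightarrow>
     (\<exists>p. \<not> trivial_group
            (relative_homology_group p (subtopology T (T closure_of V)) (T closure_of V - V)))"

definition regular :: "'a topology \<Rightarrow> 'a set \<Rightarrow> bool" where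
  "regular T V \<longleftrightarrow> \<not> critical T V"

definition mv_compatible :: "'a set set \<Rightarrow> 'a set \<Rightarrow> bool" where
  "mv_compatible VV A \<longleftrightarrow> (\<exists>W\<subseteq>VV. A = \<Union>W)"

definition lc_hull :: "'a topology \<Rightarrow> 'a set set \<Rightarrow> 'a set \<Rightarrow> 'a set" where
  "lc_hull T VV A = (LEAST B. A \<subseteq> B \<and> locally_closed T B \<and> mv_compatible VV B)"

definition Pi_mv :: "'a topology \<Rightarrow> 'a set set \<Rightarrow> 'a \<Rightarrow> 'a set" where
  "Pi_mv T VV x = T closure_of {x} \<union> mv_of VV x"

definition full_solution :: "'a topology \<Rightarrow> 'a set set \<Rightarrow> (int \<Rightarrow> 'a) \<Rightarrow> bool" where
  "full_solution T VV g \<longleftrightarrow> range g \<subseteq> topspace T \<and> (\<forall>t. g (t + 1) \<in> Pi_mv T VV (g t))"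

definition is_path :: "'a topology \<Rightarrow> 'a set set \<Rightarrow> int \<Rightarrow> int \<Rightarrow> (int \<Rightarrow> 'a) \<Rightarrow> bool" where
  "is_path T VV a b g \<longleftrightarrow> a \<le> b \<and> g ` {a..b} \<subseteq> topspace T \<and>
     (\<forall>t\<in>{a..<b}. g (t + 1) \<in> Pi_mv T VV (g t))"

definition alpha_lim :: "'a topology \<Rightarrow> 'a set set \<Rightarrow> (int \<Rightarrow> 'a) \<Rightarrow> 'a set" where
  "alpha_lim T VV g = lc_hull T VV (\<Inter>t\<in>{..0}. g ` {..t})"

definition omega_lim :: "'a topology \<Rightarrow> 'a set set \<Rightarrow> (int \<Rightarrow> 'a) \<Rightarrow> 'a set" where
  "omega_lim T VV g = lc_hull T VV (\<Inter>t\<in>{0..}. g ` {t..})"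

definition essential :: "'a topology \<Rightarrow> 'a set set \<Rightarrow> (int \<Rightarrow> 'a) \<Rightarrow> bool" where
  "essential T VV g \<longleftrightarrow> full_solution T VV g \<and>
     \<not> (\<exists>V\<in>VV. regular T V \<and> alpha_lim T VV g \<subseteq> V) \<and>
     \<not> (\<exists>V\<in>VV. regular T V \<and> omega_lim T VV g \<subseteq> V)"

definition Inv :: "'a topology \<Rightarrow> 'a set set \<Rightarrow> 'a set \<Rightarrow> 'a set" where
  "Inv T VV S = {x \<in> S. \<exists>g. essential T VV g \<and> range g \<subseteq> S \<and> g 0 = x}"

definition invariant :: "'a topology \<Rightarrow> 'a set set \<Rightarrow> 'a set \<Rightarrow> bool" where
  "invariant T VV S \<longleftrightarrow> Inv T VV S = S"

definition isolated_invariant :: "'a topology \<Rightarrow> 'a set set \<Rightarrow> 'a set \<Rightarrow> bool" where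
  "isolated_invariant T VV S \<longleftrightarrow> invariant T VV S \<and>
     (\<exists>N. closedin T N \<and> (\<Union>x\<in>S. Pi_mv T VV x) \<subseteq> N \<and>
        (\<forall>a b g. is_path T VV a b g \<and> g ` {a..b} \<subseteq> N \<and> g a \<in> S \<and> g b \<in> S
                 \<longrightarrow> g ` {a..b} \<subseteq> S))"

definition is_link :: "'a topology \<Rightarrow> 'a set set \<Rightarrow> (int \<Rightarrow> 'a) \<Rightarrow> 'a set \<Rightarrow> 'a set \<Rightarrow> bool" where
  "is_link T VV g S1 S2 \<longleftrightarrow> full_solution T VV g \<and>
     alpha_lim T VV g \<inter> S1 \<noteq> {} \<and> omega_lim T VV g \<inter> S2 \<noteq> {}"

definition morse_predecomposition ::
    "'a topology \<Rightarrow> 'a set set \<Rightarrow> 'p set \<Rightarrow> ('p \<Rightarrow> 'a set) \<Rightarrow> bool" where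
  "morse_predecomposition T VV P M \<longleftrightarrow>
     (\<forall>p\<in>P. M p \<subseteq> topspace T \<and> isolated_invariant T VV (M p)) \<and>
     (\<forall>p\<in>P. \<forall>q\<in>P. p \<noteq> q \<longrightarrow> M p \<inter> M q = {}) \<and>
     (\<forall>g. essential T VV g \<and> range g \<subseteq> topspace T \<longrightarrow>
          (\<exists>p\<in>P. \<exists>q\<in>P. is_link T VV g (M p) (M q)))"

end

theory Submission
  imports Defs
begin

lemma cl_pt:
  assumes "finite (topspace T)" "A \<subseteq> topspace T" "y \<in> T closure_of A"
  shows "\<exists>a\<in>A. y \<in> T closure_of {a}"
proof -
  have fA: "finite A" using assms finite_subset by blast
  have "A = \<Union>((\<lambda>a. {a}) ` A)" by blast
  then have "T closure_of A = (\<Union>S\<in>(\<lambda>a. {a}) ` A. T closure_of S)"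
    using closure_of_Union[of "(\<lambda>a. {a}) ` A" T] fA by simp
  then show ?thesis using assms(3) by auto
qed

definition cvx :: "'a topology \<Rightarrow> 'a set \<Rightarrow> bool" where
  "cvx T A \<longleftrightarrow> (\<forall>s\<in>A. \<forall>x\<in>A. \<forall>y. y \<in> T closure_of {s} \<and> x \<in> T closure_of {y} \<longrightarrow> y \<in> A)"

lemma lc_cvx:
  assumes fin: "finite (topspace T)" and sub: "A \<subseteq> topspace T"
  shows "locally_closed T A \<longleftrightarrow> cvx T A"
proof
  assume lc: "locally_closed T A"
  show "cvx T A" unfolding cvx_def
  proof (intro ballI allI impI)
    fix s x y assume s: "s \<in> A" and x: "x \<in> A" and y: "y \<in> T closure_of {s} \<and> x \<in> T closure_of {y}"
    show "y \<in> A"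
    proof (rule ccontr)
      assume n: "y \<notin> A"
      have "y \<in> T closure_of A" using y s closure_of_mono[of "{s}" A T] by blast
      then have yC: "{y} \<subseteq> T closure_of A - A" using n by blast
      have "closedin T (T closure_of A - A)" using lc unfolding locally_closed_def by blast
      then have "T closure_of {y} \<subseteq> T closure_of A - A" using yC closure_of_minimal by blast
      then show False using x y by blast
    qed
  qed
next
  assume c: "cvx T A"
  let ?C = "T closure_of A - A"
  have Csub: "?C \<subseteq> topspace T" using closure_of_subset_topspace[of T A] by blast
  have "T closure_of ?C \<subseteq> ?C"
  proof
    fix w assume w: "w \<in> T closure_of ?C"
    obtain u where u: "u \<in> ?C" "w \<in> T closure_of {u}" using cl_pt[OF fin Csub w] by blast
    obtain s where s: "s \<in> A" "u \<in> T closure_of {s}" using cl_pt[OF fin sub] u by blast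
    have "T closure_of {u} \<subseteq> T closure_of {s}"
      using closure_of_minimal[of "{u}" "T closure_of {s}" T] s by simp
    then have ws: "w \<in> T closure_of {s}" using u by blast
    then have "w \<in> T closure_of A" using s closure_of_mono[of "{s}" A T] by blast
    moreover have "w \<notin> A"
    proof
      assume "w \<in> A"
      then have "u \<in> A" using c s u unfolding cvx_def by blast
      then show False using u by blast
    qed
    ultimately show "w \<in> ?C" by blast
  qed
  then have "closedin T ?C" using closure_of_eq closure_of_subset[OF Csub] by blast
  then show "locally_closed T A" using sub unfolding locally_closed_def by blast
qed

lemma mv_of_eq:
  assumes "multivector_field T VV" "V \<in> VV" "x \<in> V"
  shows "mv_of VV x = V"
  unfolding mv_of_def
  using assms unfolding multivector_field_def
  by (intro the_equality) blast+

lemma mv_unique: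
  assumes "multivector_field T VV" "V \<in> VV" "W \<in> VV" "z \<in> V" "z \<in> W"
  shows "V = W"
proof (rule ccontr)
  assume "V \<noteq> W"
  then have "V \<inter> W = {}" using assms(1-3) unfolding multivector_field_def by blast
  then show False using assms(4,5) by blast
qed

lemma mv_cover:
  assumes "multivector_field T VV" "z \<in> topspace T"
  obtains V where "V \<in> VV" "z \<in> V"
  using assms unfolding multivector_field_def by blast

lemma lc_hull_sub:
  assumes fin: "finite (topspace T)" and mv: "multivector_field T VV"
    and AS: "A \<subseteq> S" and lcS: "locally_closed T S" and cS: "mv_compatible VV S"
  shows "lc_hull T VV A \<subseteq> S \<and> A \<subseteq> lc_hull T VV A \<and> mv_compatible VV (lc_hull T VV A)"
proof -
  define F where "F = {B. A \<subseteq> B \<and> locally_closed T B \<and> mv_compatible VV B}"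
  have SF: "S \<in> F" using AS lcS cS by (simp add: F_def)
  define B0 where "B0 = \<Inter>F"
  have B0S: "B0 \<subseteq> S" using SF unfolding B0_def by blast
  have Stop: "S \<subseteq> topspace T" using lcS unfolding locally_closed_def by blast
  have B0top: "B0 \<subseteq> topspace T" using B0S Stop by blast
  have AB0: "A \<subseteq> B0" unfolding B0_def F_def by blast
  have cB0: "mv_compatible VV B0"
    unfolding mv_compatible_def
  proof (intro exI[of _ "{V\<in>VV. V \<subseteq> B0}"] conjI)
    show "{V\<in>VV. V \<subseteq> B0} \<subseteq> VV" by blast
    show "B0 = \<Union>{V\<in>VV. V \<subseteq> B0}"
    proof
      show "\<Union>{V\<in>VV. V \<subseteq> B0} \<subseteq> B0" by blast
      show "B0 \<subseteq> \<Union>{V\<in>VV. V \<subseteq> B0}"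
      proof
        fix z assume z: "z \<in> B0"
        then obtain V where V: "V \<in> VV" "z \<in> V" using B0top mv_cover[OF mv] by blast
        have "V \<subseteq> B" if "B \<in> F" for B
        proof -
          have "mv_compatible VV B" using that by (simp add: F_def)
          then obtain W where W: "W \<subseteq> VV" "B = \<Union>W" unfolding mv_compatible_def by blast
          have "z \<in> B" using z that unfolding B0_def by blast
          then obtain U where "U \<in> W" "z \<in> U" using W by blast
          then have "U = V" using V W mv_unique[OF mv] by blast
          then show ?thesis using W \<open>U \<in> W\<close> by blast
        qed
        then have "V \<subseteq> B0" unfolding B0_def by blast
        then show "z \<in> \<Union>{V\<in>VV. V \<subseteq> B0}" using V by blast
      qed
    qed
  qed
  have "cvx T B0"
    unfolding cvx_def
  proof (intro ballI allI impI)
    fix s x y assume s: "s \<in> B0" and x: "x \<in> B0" and y: "y \<in> T closure_of {s} \<and> x \<in> T closure_of {y}"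
    have "y \<in> B" if "B \<in> F" for B
    proof -
      have "locally_closed T B" using that by (simp add: F_def)
      then have "cvx T B" using lc_cvx[OF fin] unfolding locally_closed_def by blast
      moreover have "s \<in> B" "x \<in> B" using s x that unfolding B0_def by blast+
      ultimately show ?thesis using y unfolding cvx_def by blast
    qed
    then show "y \<in> B0" unfolding B0_def by blast
  qed
  then have lB0: "locally_closed T B0" using lc_cvx[OF fin B0top] by blast
  have B0F: "B0 \<in> F" using AB0 cB0 lB0 by (simp add: F_def)
  have "lc_hull T VV A = B0"
    unfolding lc_hull_def
  proof (rule Least_equality)
    show "A \<subseteq> B0 \<and> locally_closed T B0 \<and> mv_compatible VV B0" using AB0 cB0 lB0 by simp
    show "B0 \<le> y" if "A \<subseteq> y \<and> locally_closed T y \<and> mv_compatible VV y" for y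
    proof -
      have "y \<in> F" using that by (simp add: F_def)
      then show ?thesis unfolding B0_def by (rule Inter_lower)
    qed
  qed
  then show ?thesis using B0S AB0 cB0 by simp
qed

lemma iso_props:
  assumes fin: "finite (topspace T)" and mv: "multivector_field T VV"
    and Stop: "S \<subseteq> topspace T" and iso: "isolated_invariant T VV S"
  shows "locally_closed T S" "mv_compatible VV S"
proof -
  obtain N where N: "closedin T N" "(\<Union>x\<in>S. Pi_mv T VV x) \<subseteq> N"
    "\<And>a b g. is_path T VV a b g \<and> g ` {a..b} \<subseteq> N \<and> g a \<in> S \<and> g b \<in> S \<Longrightarrow> g ` {a..b} \<subseteq> S"
    using iso unfolding isolated_invariant_def by blast
  have Ntop: "N \<subseteq> topspace T" using N(1) closedin_subset by blast
  have img: "(\<lambda>t::int. if t = 0 then s else if t = 1 then y else x) ` {0..2} = {s,y,x}" for s y x :: 'a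
  proof -
    have "{0..2::int} = {0,1,2}" by auto
    then show ?thesis by auto
  qed
  have path3: "y \<in> S"
    if s: "s \<in> S" and x: "x \<in> S" and y1: "y \<in> Pi_mv T VV s" and x1: "x \<in> Pi_mv T VV y" for s y x
  proof -
    define g where "g = (\<lambda>t::int. if t = 0 then s else if t = 1 then y else x)"
    have self: "z \<in> Pi_mv T VV z" if "z \<in> S" for z
    proof -
      have "{z} \<subseteq> topspace T" using that Stop by blast
      then have "z \<in> T closure_of {z}" using closure_of_subset[of "{z}" T] by blast
      then show ?thesis unfolding Pi_mv_def by blast
    qed
    have sN: "s \<in> N" "x \<in> N" using self[OF s] self[OF x] s x N(2) by blast+
    have yN: "y \<in> N" using y1 s N(2) by blast
    have gi: "g ` {0..2} = {s,y,x}" using img g_def by simp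
    have "is_path T VV 0 2 g"
      unfolding is_path_def
    proof (intro conjI)
      show "g ` {0..2} \<subseteq> topspace T" using gi sN yN Ntop by auto
      have "{0..<2::int} = {0,1}" by auto
      then show "\<forall>t\<in>{0..<2}. g (t + 1) \<in> Pi_mv T VV (g t)" using y1 x1 g_def by auto
    qed simp
    moreover have "g ` {0..2} \<subseteq> N" using gi sN yN by auto
    moreover have "g 0 \<in> S" "g 2 \<in> S" using s x unfolding g_def by simp_all
    ultimately have "g ` {0..2} \<subseteq> S" using N(3)[of 0 2 g] by blast
    then show ?thesis using gi by simp
  qed
  have "cvx T S" unfolding cvx_def
  proof (intro ballI allI impI)
    fix s x y assume s: "s \<in> S" and x: "x \<in> S" and y: "y \<in> T closure_of {s} \<and> x \<in> T closure_of {y}"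
    show "y \<in> S" using path3[OF s x] y unfolding Pi_mv_def by blast
  qed
  then show "locally_closed T S" using lc_cvx[OF fin Stop] by blast
  show "mv_compatible VV S"
    unfolding mv_compatible_def
  proof (intro exI[of _ "{V\<in>VV. V \<subseteq> S}"] conjI)
    show "{V\<in>VV. V \<subseteq> S} \<subseteq> VV" by blast
    show "S = \<Union>{V\<in>VV. V \<subseteq> S}"
    proof
      show "\<Union>{V\<in>VV. V \<subseteq> S} \<subseteq> S" by blast
      show "S \<subseteq> \<Union>{V\<in>VV. V \<subseteq> S}"
      proof
        fix z assume z: "z \<in> S"
        then obtain V where V: "V \<in> VV" "z \<in> V" using Stop mv_cover[OF mv] by blast
        have "V \<subseteq> S"
        proof
          fix w assume w: "w \<in> V"
          have e1: "mv_of VV z = V" using mv_of_eq[OF mv V(1) V(2)] .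
          have e2: "mv_of VV w = V" using mv_of_eq[OF mv V(1) w] .
          have "w \<in> Pi_mv T VV z" unfolding Pi_mv_def e1 using w by blast
          moreover have "z \<in> Pi_mv T VV w" unfolding Pi_mv_def e2 using V(2) by blast
          ultimately show "w \<in> S" using path3[OF z z] by blast
        qed
        then show "z \<in> \<Union>{V\<in>VV. V \<subseteq> S}" using V by blast
      qed
    qed
  qed
qed

theorem proposition4p4:
  fixes T :: "'a topology" and VV :: "'a set set" and P :: "'p set" and M :: "'p \<Rightarrow> 'a set"
  assumes "finite (topspace T)"
    and "t0_space T"
    and "multivector_field T VV"
    and "invariant T VV (topspace T)"
    and "morse_predecomposition T VV P M"
  shows "(\<forall>S. S \<subseteq> topspace T \<and> S \<noteq> {} \<and> isolated_invariant T VV S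
              \<longrightarrow> S \<inter> (\<Union>p\<in>P. M p) \<noteq> {})
         \<and> (\<forall>V\<in>VV. critical T V \<longrightarrow> V \<subseteq> (\<Union>p\<in>P. M p))"
proof (intro conjI allI impI ballI)
  note fin = assms(1) and mv = assms(3)
  have md: "(\<forall>p\<in>P. M p \<subseteq> topspace T \<and> isolated_invariant T VV (M p)) \<and>
     (\<forall>p\<in>P. \<forall>q\<in>P. p \<noteq> q \<longrightarrow> M p \<inter> M q = {}) \<and>
     (\<forall>g. essential T VV g \<and> range g \<subseteq> topspace T \<longrightarrow>
          (\<exists>p\<in>P. \<exists>q\<in>P. is_link T VV g (M p) (M q)))"
    using assms(5) unfolding morse_predecomposition_def .
  have MP: "M p \<subseteq> topspace T \<and> isolated_invariant T VV (M p)" if "p \<in> P" for p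
    using md that by (elim conjE) (erule ballE, assumption, contradiction)
  have link: "\<exists>p\<in>P. \<exists>q\<in>P. is_link T VV g (M p) (M q)"
    if "essential T VV g" "range g \<subseteq> topspace T" for g
  proof -
    have "\<forall>g. essential T VV g \<and> range g \<subseteq> topspace T \<longrightarrow>
          (\<exists>p\<in>P. \<exists>q\<in>P. is_link T VV g (M p) (M q))" using md by (elim conjE)
    then show ?thesis using that by simp
  qed
  {
    fix S assume S: "S \<subseteq> topspace T \<and> S \<noteq> {} \<and> isolated_invariant T VV S"
    then obtain x where "x \<in> S" by blast
    then have "x \<in> Inv T VV S" using S unfolding isolated_invariant_def invariant_def by simp
    then obtain g where g: "essential T VV g" "range g \<subseteq> S" unfolding Inv_def by blast
    have "range g \<subseteq> topspace T" using g(2) S by blast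
    then obtain p q where p: "p \<in> P" and l: "is_link T VV g (M p) (M q)"
      using link[OF g(1)] by blast
    have Stop: "S \<subseteq> topspace T" and isoS: "isolated_invariant T VV S" using S by blast+
    have sub: "(\<Inter>t\<in>{..0}. g ` {..t}) \<subseteq> S" using g(2) by blast
    have "alpha_lim T VV g \<subseteq> S"
      unfolding alpha_lim_def
      using lc_hull_sub[OF fin mv sub iso_props(1)[OF fin mv Stop isoS] iso_props(2)[OF fin mv Stop isoS]]
      by blast
    then show "S \<inter> (\<Union>p\<in>P. M p) \<noteq> {}" using l p unfolding is_link_def by blast
  }
  {
    fix V assume V: "V \<in> VV" and cr: "critical T V"
    have "V \<noteq> {}" using V mv unfolding multivector_field_def by blast
    then obtain x where x: "x \<in> V" by blast
    have lcV: "locally_closed T V" using V mv unfolding multivector_field_def by blast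
    have Vtop: "V \<subseteq> topspace T" using lcV unfolding locally_closed_def by blast
    define g where "g = (\<lambda>t::int. x)"
    have xt: "x \<in> topspace T" using x Vtop by blast
    have fs: "full_solution T VV g"
      unfolding full_solution_def g_def Pi_mv_def using xt closure_of_subset[of "{x}" T] by auto
    have A1: "(\<Inter>t\<in>{..0}. g ` {..t}) = {x}" unfolding g_def by auto
    have A2: "(\<Inter>t\<in>{0..}. g ` {t..}) = {x}" unfolding g_def by auto
    have hull: "lc_hull T VV {x} = V"
    proof -
      have cV: "mv_compatible VV V" unfolding mv_compatible_def using V by (intro exI[of _ "{V}"]) auto
      have sub: "lc_hull T VV {x} \<subseteq> V" using lc_hull_sub[OF fin mv _ lcV cV] x by blast
      have "mv_compatible VV (lc_hull T VV {x})" "x \<in> lc_hull T VV {x}"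
        using lc_hull_sub[OF fin mv _ lcV cV] x by auto
      then obtain W where W: "W \<subseteq> VV" "lc_hull T VV {x} = \<Union>W" "x \<in> \<Union>W"
        unfolding mv_compatible_def by auto
      then obtain U where "U \<in> W" "x \<in> U" by blast
      then have "U = V" using V W x mv_unique[OF mv] by blast
      then have "V \<subseteq> lc_hull T VV {x}" using W \<open>U \<in> W\<close> by blast
      then show ?thesis using sub by blast
    qed
    have notreg: "\<not> (\<exists>V'\<in>VV. regular T V' \<and> V \<subseteq> V')"
    proof
      assume "\<exists>V'\<in>VV. regular T V' \<and> V \<subseteq> V'"
      then obtain V' where "V' \<in> VV" "regular T V'" "V \<subseteq> V'" by blast
      then have "V' = V" using V x mv_unique[OF mv] by blast
      then show False using cr \<open>regular T V'\<close> regular_def by blast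
    qed
    have ess: "essential T VV g"
      unfolding essential_def alpha_lim_def omega_lim_def A1 A2 hull using fs notreg by blast
    have rg: "range g \<subseteq> topspace T" using fs unfolding full_solution_def by blast
    obtain p q where p: "p \<in> P" and l0: "is_link T VV g (M p) (M q)"
      using link[OF ess rg] by blast
    have l: "alpha_lim T VV g \<inter> M p \<noteq> {}" using l0 unfolding is_link_def by blast
    have "V \<inter> M p \<noteq> {}" using l unfolding alpha_lim_def A1 hull .
    then obtain z where z: "z \<in> V" "z \<in> M p" by blast
    note Mt = conjunct1[OF MP[OF p]] and Mi = conjunct2[OF MP[OF p]]
    have "mv_compatible VV (M p)" using iso_props(2)[OF fin mv Mt Mi] .
    then have "\<exists>W. W \<subseteq> VV \<and> M p = \<Union>W" unfolding mv_compatible_def .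
    then obtain W where W: "W \<subseteq> VV" "M p = \<Union>W" by (elim exE conjE)
    then obtain U where "U \<in> W" "z \<in> U" using z by blast
    then have "U = V" using V W z mv_unique[OF mv] by blast
    then have "V \<subseteq> M p" using W \<open>U \<in> W\<close> by blast
    then show "V \<subseteq> (\<Union>p\<in>P. M p)" using p by blast
  }
qed

end
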